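(* Let $(A,\circ,[\cdot,\cdot])$ be a finite-dimensional dual pre-Poisson algebra and let $r\in A\otimes A$ be symmetric. Then $r$ is a solution of the permutative-Leibniz Yang–Baxter equation if and only if $\tilde r:A^*\to A$ satisfies, for all $a^*,b^*\in A^*$, $$\tilde r(a^* )\circ\tilde r(b^* )=\tilde r\big(-L_\circ^*(\tilde r(a^* ))b^*-L_\blacksquare^*(\tilde r(b^* ))a^*\big),$$ $$[\tilde r(a^* ),\tilde r(b^* )]=\tilde r\big(L_{[\cdot,\cdot]}^*(\tilde r(a^* ))b^*-L_\square^*(\tilde r(b^* ))a^*\big),$$ i.e. $\tilde r$ is an $\mathcal{O}$-operator on $(A,\circ,[\cdot,\cdot])$ associated to the representation $(A^*;-L_\circ^*,-L_\blacksquare^*,L_{[\cdot,\cdot]}^*,-L_\square^* )$.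
   Context: Field $\mathbb{F}$ of characteristic $0$. Dual pre-Poisson algebra: $x\circ(y\circ z)=(x\circ y)\circ z=(y\circ x)\circ z$; $[x,[y,z]]=[[x,y],z]+[y,[x,z]]$; $[x,y\circ z]=[x,y]\circ z+y\circ[x,z]$; $[x\circ y,z]=x\circ[y,z]+y\circ[x,z]$; $[x,y]\circ z=-[y,x]\circ z$. $x\blacksquare y=x\circ y-y\circ x$, $x\square y=[x,y]+[y,x]$; $L_\diamond(x)y=x\diamond y$; for $f:A\to\mathrm{End}(A)$, $\langle f^*(x)a^*,y\rangle=-\langle a^*,f(x)y\rangle$. For $r\in A\otimes A$, $\tilde r:A^*\to A$ is defined by $\langle\tilde r(u^* ),v^*\rangle=\langle r,u^*\otimes v^*\rangle$. Symmetric means invariant under the flip. PLYBE: for $r=\sum_i a_i\otimes b_i$, $\mathbf{P}(r)=\sum_{i,j}\big(a_i\otimes a_j\otimes b_i\circ b_j-a_i\otimes b_i\circ a_j\otimes b_j+a_i\blacksquare a_j\otimes b_j\otimes b_i\big)$, $\mathbf{L}(r)=\sum_{i,j}\big(a_i\otimes a_j\otimes[b_i,b_j]+a_i\otimes[b_i,a_j]\otimes b_j-a_i\square a_j\otimes b_i\otimes b_j\big)$; $r$ is a solution if $\mathbf{P}(r)=\mathbf{L}(r)=0$. *)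

theory Defs
  imports Main
begin

text \<open>A finite-dimensional vector space over a field 'k of characteristic 0 is
  modelled in coordinates w.r.t. a basis indexed by a finite type 'n:
  vectors are functions 'n \<Rightarrow> 'k.  The dual space A* is modelled via the dual
  basis, also as functions 'n \<Rightarrow> 'k, with the pairing below.
  Tensors in A\<otimes>A (resp. A\<otimes>A\<otimes>A) are coefficient arrays.\<close>

type_synonym ('k, 'n) vec = "'n \<Rightarrow> 'k"

definition vadd :: "('k::field, 'n) vec \<Rightarrow> ('k, 'n) vec \<Rightarrow> ('k, 'n) vec" where
  "vadd x y = (\<lambda>i. x i + y i)"

definition vsub :: "('k::field, 'n) vec \<Rightarrow> ('k, 'n) vec \<Rightarrow> ('k, 'n) vec" where
  "vsub x y = (\<lambda>i. x i - y i)"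

definition vneg :: "('k::field, 'n) vec \<Rightarrow> ('k, 'n) vec" where
  "vneg x = (\<lambda>i. - x i)"

definition vsmult :: "'k::field \<Rightarrow> ('k, 'n) vec \<Rightarrow> ('k, 'n) vec" where
  "vsmult c x = (\<lambda>i. c * x i)"

definition basis_vec :: "'n \<Rightarrow> ('k::field, 'n) vec" where
  "basis_vec j = (\<lambda>i. if i = j then 1 else 0)"

definition dpair :: "('k::field, 'n::finite) vec \<Rightarrow> ('k, 'n) vec \<Rightarrow> 'k" where
  "dpair u x = (\<Sum>i\<in>UNIV. u i * x i)"

definition bilinear_op :: "(('k::field, 'n) vec \<Rightarrow> ('k, 'n) vec \<Rightarrow> ('k, 'n) vec) \<Rightarrow> bool" where
  "bilinear_op m \<longleftrightarrow>
     (\<forall>x y z. m (vadd x y) z = vadd (m x z) (m y z)) \<and>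
     (\<forall>x y z. m x (vadd y z) = vadd (m x y) (m x z)) \<and>
     (\<forall>c x y. m (vsmult c x) y = vsmult c (m x y)) \<and>
     (\<forall>c x y. m x (vsmult c y) = vsmult c (m x y))"

definition dual_pre_poisson ::
  "(('k::field, 'n) vec \<Rightarrow> ('k, 'n) vec \<Rightarrow> ('k, 'n) vec) \<Rightarrow>
   (('k, 'n) vec \<Rightarrow> ('k, 'n) vec \<Rightarrow> ('k, 'n) vec) \<Rightarrow> bool" where
  "dual_pre_poisson cc br \<longleftrightarrow>
     bilinear_op cc \<and> bilinear_op br \<and>
     (\<forall>x y z. cc x (cc y z) = cc (cc x y) z) \<and>
     (\<forall>x y z. cc (cc x y) z = cc (cc y x) z) \<and>
     (\<forall>x y z. br x (br y z) = vadd (br (br x y) z) (br y (br x z))) \<and>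
     (\<forall>x y z. br x (cc y z) = vadd (cc (br x y) z) (cc y (br x z))) \<and>
     (\<forall>x y z. br (cc x y) z = vadd (cc x (br y z)) (cc y (br x z))) \<and>
     (\<forall>x y z. cc (br x y) z = vneg (cc (br y x) z))"

definition bsq_op where "bsq_op cc x y = vsub (cc x y) (cc y x)"
definition sq_op where "sq_op br x y = vadd (br x y) (br y x)"

text \<open>For \<open>f : A \<rightarrow> End(A)\<close> (given as \<open>f x y\<close>), \<open>f\<^sup>*(x) : A* \<rightarrow> A*\<close> with
  \<open>\<langle>f\<^sup>*(x) a, y\<rangle> = - \<langle>a, f(x) y\<rangle>\<close>, in dual-basis coordinates.\<close>
definition dual_op ::
  "(('k::field, 'n::finite) vec \<Rightarrow> ('k, 'n) vec \<Rightarrow> ('k, 'n) vec) \<Rightarrow>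
   ('k, 'n) vec \<Rightarrow> ('k, 'n) vec \<Rightarrow> ('k, 'n) vec" where
  "dual_op f x a = (\<lambda>j. - dpair a (f x (basis_vec j)))"

text \<open>\<open>r \<in> A\<otimes>A\<close> as a coefficient array; \<open>\<tilde>r\<close> with \<open>\<langle>\<tilde>r(u), v\<rangle> = \<langle>r, u\<otimes>v\<rangle>\<close>.\<close>
definition r_tilde :: "('n::finite \<Rightarrow> 'n \<Rightarrow> 'k::field) \<Rightarrow> ('k, 'n) vec \<Rightarrow> ('k, 'n) vec" where
  "r_tilde r u = (\<lambda>j. \<Sum>i\<in>UNIV. u i * r i j)"

definition tensor_sym :: "('n \<Rightarrow> 'n \<Rightarrow> 'k) \<Rightarrow> bool" where
  "tensor_sym r \<longleftrightarrow> (\<forall>i j. r i j = r j i)"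

definition tensor_of :: "nat \<Rightarrow> (nat \<Rightarrow> ('k::field, 'n) vec) \<Rightarrow> (nat \<Rightarrow> ('k, 'n) vec) \<Rightarrow> 'n \<Rightarrow> 'n \<Rightarrow> 'k" where
  "tensor_of m a b = (\<lambda>p q. \<Sum>i<m. a i p * b i q)"

definition P_of where
  "P_of cc m a b = (\<lambda>p q s. \<Sum>i<m. \<Sum>j<m.
      a i p * a j q * cc (b i) (b j) s
    - a i p * cc (b i) (a j) q * b j s
    + bsq_op cc (a i) (a j) p * b j q * b i s)"

definition L_of where
  "L_of br m a b = (\<lambda>p q s. \<Sum>i<m. \<Sum>j<m.
      a i p * a j q * br (b i) (b j) s
    + a i p * br (b i) (a j) q * b j s
    - sq_op br (a i) (a j) p * b i q * b j s)"

definition PLYBE_solution where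
  "PLYBE_solution cc br m a b \<longleftrightarrow> P_of cc m a b = (\<lambda>p q s. 0) \<and> L_of br m a b = (\<lambda>p q s. 0)"

end

theory Submission
  imports Defs
begin

definition lc :: "'i set \<Rightarrow> ('i \<Rightarrow> 'k::field) \<Rightarrow> ('i \<Rightarrow> ('k, 'n) vec) \<Rightarrow> ('k, 'n) vec" where
  "lc I c x = (\<lambda>k. \<Sum>i\<in>I. c i * x i k)"

lemma bil_zero_l:
  assumes "bilinear_op f" shows "f (\<lambda>_. 0) y = (\<lambda>_. 0)"
proof -
  have "f (vsmult 0 y) y = vsmult 0 (f y y)" using assms unfolding bilinear_op_def by blast
  moreover have "vsmult 0 y = (\<lambda>_. 0)" "vsmult 0 (f y y) = (\<lambda>_. 0)" by (auto simp: vsmult_def)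
  ultimately show ?thesis by simp
qed

lemma bil_zero_r:
  assumes "bilinear_op f" shows "f y (\<lambda>_. 0) = (\<lambda>_. 0)"
proof -
  have "f y (vsmult 0 y) = vsmult 0 (f y y)" using assms unfolding bilinear_op_def by blast
  moreover have "vsmult 0 y = (\<lambda>_. 0)" "vsmult 0 (f y y) = (\<lambda>_. 0)" by (auto simp: vsmult_def)
  ultimately show ?thesis by simp
qed

lemma lc_insert: "finite I \<Longrightarrow> i \<notin> I \<Longrightarrow> lc (insert i I) c x = vadd (vsmult (c i) (x i)) (lc I c x)"
  by (auto simp: lc_def vadd_def vsmult_def)

lemma lc_left:
  assumes "bilinear_op f" "finite I"
  shows "f (lc I c x) y = lc I c (\<lambda>i. f (x i) y)"
  using assms(2)
proof (induction I rule: finite_induct)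
  case empty
  then show ?case using bil_zero_l[OF assms(1)] by (simp add: lc_def)
next
  case (insert i I)
  then show ?case using assms(1) unfolding bilinear_op_def by (simp add: lc_insert)
qed

lemma lc_right:
  assumes "bilinear_op f" "finite I"
  shows "f y (lc I c x) = lc I c (\<lambda>i. f y (x i))"
  using assms(2)
proof (induction I rule: finite_induct)
  case empty
  then show ?case using bil_zero_r[OF assms(1)] by (simp add: lc_def)
next
  case (insert i I)
  then show ?case using assms(1) unfolding bilinear_op_def by (simp add: lc_insert)
qed

lemma vec_exp: "(x :: ('k::field, 'n::finite) vec) = lc UNIV x basis_vec"
proof (rule ext)
  fix k
  have "(\<Sum>i\<in>UNIV. x i * basis_vec i k) = (\<Sum>i\<in>UNIV. if k = i then x i else 0)"
    by (rule sum.cong) (auto simp: basis_vec_def)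
  then show "x k = lc UNIV x basis_vec k" by (simp add: lc_def)
qed

lemma dpair_lc: "finite I \<Longrightarrow> dpair u (lc I c x) = (\<Sum>i\<in>I. c i * dpair u (x i))"
  unfolding dpair_def lc_def
  by (simp add: sum_distrib_left sum.swap[of _ UNIV I] mult.left_commute)

lemma dpair_vadd: "dpair (vadd x y) z = dpair x z + dpair y z"
  by (simp add: dpair_def vadd_def distrib_right sum.distrib)

lemma dpair_vneg_dual:
  assumes "bilinear_op f"
  shows "dpair (vneg (dual_op f x v)) y = dpair v (f x y)"
proof -
  have "f x y = lc UNIV y (\<lambda>j. f x (basis_vec j))"
    by (subst vec_exp[of y]) (simp add: lc_right[OF assms])
  then have "dpair v (f x y) = (\<Sum>j\<in>UNIV. y j * dpair v (f x (basis_vec j)))"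
    by (simp add: dpair_lc)
  then show ?thesis by (simp add: dpair_def vneg_def dual_op_def mult.commute)
qed

lemma dpair_dual:
  assumes "bilinear_op f"
  shows "dpair (dual_op f x v) y = - dpair v (f x y)"
  using dpair_vneg_dual[OF assms, of x v y]
  by (simp add: dpair_def vneg_def sum_negf) (metis minus_minus)

lemma bil2:
  assumes "bilinear_op f" "finite I" "finite J"
  shows "f (lc I c x) (lc J d y) k = (\<Sum>i\<in>I. \<Sum>j\<in>J. c i * d j * f (x i) (y j) k)"
proof -
  have "f (lc I c x) (lc J d y) = lc I c (\<lambda>i. lc J d (\<lambda>j. f (x i) (y j)))"
    using assms by (simp add: lc_left lc_right)
  then show ?thesis by (simp add: lc_def sum_distrib_left mult.assoc)
qed

lemma dpair_bil2:
  assumes "bilinear_op f" "finite I" "finite J"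
  shows "dpair v (f (lc I c x) (lc J d y)) = (\<Sum>i\<in>I. \<Sum>j\<in>J. c i * d j * dpair v (f (x i) (y j)))"
proof -
  have "f (lc I c x) (lc J d y) = lc I c (\<lambda>i. lc J d (\<lambda>j. f (x i) (y j)))"
    using assms by (simp add: lc_left lc_right)
  then show ?thesis using assms by (simp add: dpair_lc sum_distrib_left mult.assoc)
qed

lemma dpair_bsq: "dpair u (bsq_op f x y) = - dpair u (bsq_op f y x)"
  by (simp add: dpair_def bsq_op_def vsub_def sum_negf[symmetric] right_diff_distrib)

lemma sumPQ:
  "(\<Sum>p\<in>UNIV. \<Sum>q\<in>UNIV. (u p :: 'k::field) * v q * (\<Sum>i\<in>I. \<Sum>j\<in>J. F i j p q))
   = (\<Sum>i\<in>I. \<Sum>j\<in>J. \<Sum>p\<in>(UNIV::'n::finite set). \<Sum>q\<in>UNIV. u p * v q * F i j p q)"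
proof -
  have "(\<Sum>p\<in>UNIV. \<Sum>q\<in>UNIV. u p * v q * (\<Sum>i\<in>I. \<Sum>j\<in>J. F i j p q))
     = (\<Sum>p\<in>UNIV. \<Sum>q\<in>UNIV. \<Sum>i\<in>I. \<Sum>j\<in>J. u p * v q * F i j p q)"
    by (simp only: sum_distrib_left)
  also have "\<dots> = (\<Sum>p\<in>UNIV. \<Sum>i\<in>I. \<Sum>q\<in>UNIV. \<Sum>j\<in>J. u p * v q * F i j p q)"
    by (rule sum.cong[OF refl], rule sum.swap)
  also have "\<dots> = (\<Sum>i\<in>I. \<Sum>p\<in>UNIV. \<Sum>q\<in>UNIV. \<Sum>j\<in>J. u p * v q * F i j p q)"
    by (rule sum.swap)
  also have "\<dots> = (\<Sum>i\<in>I. \<Sum>p\<in>UNIV. \<Sum>j\<in>J. \<Sum>q\<in>UNIV. u p * v q * F i j p q)"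
    by (rule sum.cong[OF refl], rule sum.cong[OF refl], rule sum.swap)
  also have "\<dots> = (\<Sum>i\<in>I. \<Sum>j\<in>J. \<Sum>p\<in>UNIV. \<Sum>q\<in>UNIV. u p * v q * F i j p q)"
    by (rule sum.cong[OF refl], rule sum.swap)
  finally show ?thesis .
qed

lemma term1:
  "(\<Sum>p\<in>UNIV. \<Sum>q\<in>UNIV. u p * v q * (\<alpha> p * \<beta> q * g))
   = dpair u \<alpha> * dpair v \<beta> * g"
  for u v :: "('k::field, 'n::finite) vec"
proof -
  have "dpair u \<alpha> * dpair v \<beta> * g = (\<Sum>p\<in>UNIV. \<Sum>q\<in>UNIV. (u p * \<alpha> p) * (v q * \<beta> q)) * g"
    unfolding dpair_def by (simp only: sum_product)
  also have "\<dots> = (\<Sum>p\<in>UNIV. \<Sum>q\<in>UNIV. u p * v q * (\<alpha> p * \<beta> q * g))"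
    by (simp only: sum_distrib_right) (rule sum.cong, simp, rule sum.cong, simp_all add: mult_ac)
  finally show ?thesis by simp
qed

lemma term3:
  "(\<Sum>p\<in>UNIV. \<Sum>q\<in>UNIV. u p * v q *
      (\<alpha>1 p * \<beta>1 q * g1 + \<alpha>2 p * \<beta>2 q * g2 + \<alpha>3 p * \<beta>3 q * g3))
   = dpair u \<alpha>1 * dpair v \<beta>1 * g1 + dpair u \<alpha>2 * dpair v \<beta>2 * g2 + dpair u \<alpha>3 * dpair v \<beta>3 * g3"
  for u v :: "('k::field, 'n::finite) vec"
  by (simp only: distrib_left sum.distrib term1)

lemma bil_bsq: "bilinear_op f \<Longrightarrow> bilinear_op (bsq_op f)"
  unfolding bilinear_op_def bsq_op_def
  by (simp add: vsub_def vadd_def vsmult_def fun_eq_iff algebra_simps)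

lemma bil_sq: "bilinear_op f \<Longrightarrow> bilinear_op (sq_op f)"
  unfolding bilinear_op_def sq_op_def
  by (simp add: vadd_def vsmult_def fun_eq_iff algebra_simps)

lemma basis_sum:
  "(\<Sum>p'\<in>UNIV. \<Sum>q'\<in>UNIV. basis_vec p p' * basis_vec q q' * (F p' q' :: 'k::field)) = F p q"
  for p q :: "'n::finite"
proof -
  have "\<And>p'. (\<Sum>q'\<in>UNIV. basis_vec p p' * basis_vec q q' * (F p' q' :: 'k::field))
          = basis_vec p p' * F p' q"
  proof -
    fix p'
    have "(\<Sum>q'\<in>UNIV. basis_vec p p' * basis_vec q q' * (F p' q' :: 'k::field))
       = (\<Sum>q'\<in>UNIV. if q = q' then basis_vec p p' * F p' q' else 0)"
      by (rule sum.cong) (auto simp: basis_vec_def)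
    then show "(\<Sum>q'\<in>UNIV. basis_vec p p' * basis_vec q q' * (F p' q' :: 'k::field))
          = basis_vec p p' * F p' q" by simp
  qed
  then have "(\<Sum>p'\<in>UNIV. \<Sum>q'\<in>UNIV. basis_vec p p' * basis_vec q q' * (F p' q' :: 'k::field))
     = (\<Sum>p'\<in>UNIV. basis_vec p p' * F p' q)" by simp
  also have "\<dots> = (\<Sum>p'\<in>UNIV. if p = p' then F p' q else 0)"
    by (rule sum.cong) (auto simp: basis_vec_def)
  finally have "(\<Sum>p'\<in>UNIV. \<Sum>q'\<in>UNIV. basis_vec p p' * basis_vec q q' * (F p' q' :: 'k::field))
     = (\<Sum>p'\<in>UNIV. if p = p' then F p' q else 0)" .
  then show ?thesis by simp
qed

lemma rt_a: "r_tilde (tensor_of m a b) u = lc {..<m} (\<lambda>i. dpair u (a i)) b"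
proof (rule ext)
  fix j
  have "r_tilde (tensor_of m a b) u j = (\<Sum>p\<in>UNIV. \<Sum>i<m. u p * (a i p * b i j))"
    by (simp add: r_tilde_def tensor_of_def sum_distrib_left)
  also have "\<dots> = (\<Sum>i<m. \<Sum>p\<in>UNIV. u p * (a i p * b i j))" by (rule sum.swap)
  also have "\<dots> = lc {..<m} (\<lambda>i. dpair u (a i)) b j"
    by (simp add: lc_def dpair_def sum_distrib_left mult_ac)
  finally show "r_tilde (tensor_of m a b) u j = lc {..<m} (\<lambda>i. dpair u (a i)) b j" .
qed

lemma rt_b:
  assumes "tensor_sym (tensor_of m a b)"
  shows "r_tilde (tensor_of m a b) u = lc {..<m} (\<lambda>i. dpair u (b i)) a"
proof (rule ext)
  fix j
  have "r_tilde (tensor_of m a b) u j = (\<Sum>p\<in>UNIV. u p * tensor_of m a b j p)"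
    using assms by (simp add: r_tilde_def tensor_sym_def)
  also have "\<dots> = (\<Sum>p\<in>UNIV. \<Sum>i<m. u p * (a i j * b i p))"
    by (simp add: tensor_of_def sum_distrib_left)
  also have "\<dots> = (\<Sum>i<m. \<Sum>p\<in>UNIV. u p * (a i j * b i p))" by (rule sum.swap)
  also have "\<dots> = lc {..<m} (\<lambda>i. dpair u (b i)) a j"
    by (simp add: lc_def dpair_def sum_distrib_left mult_ac)
  finally show "r_tilde (tensor_of m a b) u j = lc {..<m} (\<lambda>i. dpair u (b i)) a j" .
qed

lemma rt_eval: "r_tilde (tensor_of m a b) X s = dpair X (lc {..<m} (\<lambda>i. b i s) a)"
  by (simp add: r_tilde_def tensor_of_def dpair_def lc_def mult_ac)

lemma eq1:
  assumes bc: "bilinear_op cc" and sym: "tensor_sym (tensor_of m a b)"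
  shows "cc (r_tilde (tensor_of m a b) u) (r_tilde (tensor_of m a b) v) s
     - r_tilde (tensor_of m a b) (vadd (vneg (dual_op cc (r_tilde (tensor_of m a b) u) v))
                          (vneg (dual_op (bsq_op cc) (r_tilde (tensor_of m a b) v) u))) s
     = (\<Sum>p\<in>UNIV. \<Sum>q\<in>UNIV. u p * v q * P_of cc m a b p q s)"
proof -
  let ?R = "tensor_of m a b"
  let ?col = "lc {..<m} (\<lambda>i. b i s) a"
  have A: "cc (r_tilde ?R u) (r_tilde ?R v) s
      = (\<Sum>i<m. \<Sum>j<m. dpair u (a i) * dpair v (a j) * cc (b i) (b j) s)"
    by (simp only: rt_a bil2[OF bc finite_lessThan finite_lessThan])
  have B: "dpair v (cc (r_tilde ?R u) ?col)
      = (\<Sum>i<m. \<Sum>j<m. dpair u (a i) * b j s * dpair v (cc (b i) (a j)))"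
    by (simp only: rt_a dpair_bil2[OF bc finite_lessThan finite_lessThan])
  have hb: "\<And>x y. dpair v (b y) * b x s * dpair u (bsq_op cc (a y) (a x))
      = - (dpair u (bsq_op cc (a x) (a y)) * dpair v (b y) * b x s)"
    by (subst dpair_bsq) (simp add: mult_ac)
  have "dpair u (bsq_op cc (r_tilde ?R v) ?col)
      = (\<Sum>i<m. \<Sum>j<m. dpair v (b i) * b j s * dpair u (bsq_op cc (a i) (a j)))"
    by (simp only: rt_b[OF sym] dpair_bil2[OF bil_bsq[OF bc] finite_lessThan finite_lessThan])
  also have "\<dots> = (\<Sum>j<m. \<Sum>i<m. dpair v (b i) * b j s * dpair u (bsq_op cc (a i) (a j)))"
    by (rule sum.swap)
  also have "\<dots> = (\<Sum>i<m. \<Sum>j<m. - (dpair u (bsq_op cc (a i) (a j)) * dpair v (b j) * b i s))"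
    by (simp only: hb)
  finally have C: "dpair u (bsq_op cc (r_tilde ?R v) ?col)
      = (\<Sum>i<m. \<Sum>j<m. - (dpair u (bsq_op cc (a i) (a j)) * dpair v (b j) * b i s))" .
  have X: "r_tilde ?R (vadd (vneg (dual_op cc (r_tilde ?R u) v))
                          (vneg (dual_op (bsq_op cc) (r_tilde ?R v) u))) s
      = dpair v (cc (r_tilde ?R u) ?col) + dpair u (bsq_op cc (r_tilde ?R v) ?col)"
    by (simp only: rt_eval dpair_vadd dpair_vneg_dual[OF bc] dpair_vneg_dual[OF bil_bsq[OF bc]])
  have Pf: "P_of cc m a b = (\<lambda>p q s. \<Sum>i<m. \<Sum>j<m.
      a i p * a j q * cc (b i) (b j) s + a i p * cc (b i) (a j) q * (- b j s)
    + bsq_op cc (a i) (a j) p * b j q * b i s)"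
    by (rule ext)+ (simp add: P_of_def)
  have P: "(\<Sum>p\<in>UNIV. \<Sum>q\<in>UNIV. u p * v q * P_of cc m a b p q s)
     = (\<Sum>i<m. \<Sum>j<m. dpair u (a i) * dpair v (a j) * cc (b i) (b j) s
          + dpair u (a i) * dpair v (cc (b i) (a j)) * (- b j s)
          + dpair u (bsq_op cc (a i) (a j)) * dpair v (b j) * b i s)"
    unfolding Pf by (simp only: sumPQ term3)
  show ?thesis unfolding X A B C P
    by (simp add: sum.distrib sum_subtractf sum_negf mult_ac)
qed

lemma eq2:
  assumes bb: "bilinear_op br" and sym: "tensor_sym (tensor_of m a b)"
  shows "br (r_tilde (tensor_of m a b) u) (r_tilde (tensor_of m a b) v) s
     - r_tilde (tensor_of m a b) (vadd (dual_op br (r_tilde (tensor_of m a b) u) v)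
                          (vneg (dual_op (sq_op br) (r_tilde (tensor_of m a b) v) u))) s
     = (\<Sum>p\<in>UNIV. \<Sum>q\<in>UNIV. u p * v q * L_of br m a b p q s)"
proof -
  let ?R = "tensor_of m a b"
  let ?col = "lc {..<m} (\<lambda>i. b i s) a"
  have A: "br (r_tilde ?R u) (r_tilde ?R v) s
      = (\<Sum>i<m. \<Sum>j<m. dpair u (a i) * dpair v (a j) * br (b i) (b j) s)"
    by (simp only: rt_a bil2[OF bb finite_lessThan finite_lessThan])
  have B: "dpair v (br (r_tilde ?R u) ?col)
      = (\<Sum>i<m. \<Sum>j<m. dpair u (a i) * b j s * dpair v (br (b i) (a j)))"
    by (simp only: rt_a dpair_bil2[OF bb finite_lessThan finite_lessThan])
  have C: "dpair u (sq_op br (r_tilde ?R v) ?col)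
      = (\<Sum>i<m. \<Sum>j<m. dpair v (b i) * b j s * dpair u (sq_op br (a i) (a j)))"
    by (simp only: rt_b[OF sym] dpair_bil2[OF bil_sq[OF bb] finite_lessThan finite_lessThan])
  have X: "r_tilde ?R (vadd (dual_op br (r_tilde ?R u) v)
                          (vneg (dual_op (sq_op br) (r_tilde ?R v) u))) s
      = - dpair v (br (r_tilde ?R u) ?col) + dpair u (sq_op br (r_tilde ?R v) ?col)"
    by (simp only: rt_eval dpair_vadd dpair_dual[OF bb] dpair_vneg_dual[OF bil_sq[OF bb]])
  have Lf: "L_of br m a b = (\<lambda>p q s. \<Sum>i<m. \<Sum>j<m.
      a i p * a j q * br (b i) (b j) s + a i p * br (b i) (a j) q * b j s
    + sq_op br (a i) (a j) p * b i q * (- b j s))"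
    by (rule ext)+ (simp add: L_of_def)
  have P: "(\<Sum>p\<in>UNIV. \<Sum>q\<in>UNIV. u p * v q * L_of br m a b p q s)
     = (\<Sum>i<m. \<Sum>j<m. dpair u (a i) * dpair v (a j) * br (b i) (b j) s
          + dpair u (a i) * dpair v (br (b i) (a j)) * b j s
          + dpair u (sq_op br (a i) (a j)) * dpair v (b i) * (- b j s))"
    unfolding Lf by (simp only: sumPQ term3)
  show ?thesis unfolding X A B C P
    by (simp add: sum.distrib sum_subtractf sum_negf mult_ac)
qed

theorem proposition3p19:
  fixes cc br :: "('k::field_char_0, 'n::finite) vec \<Rightarrow> ('k, 'n) vec \<Rightarrow> ('k, 'n) vec"
    and m :: nat and a b :: "nat \<Rightarrow> ('k, 'n) vec"
    and r :: "'n \<Rightarrow> 'n \<Rightarrow> 'k"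
  assumes "dual_pre_poisson cc br"
    and "r = tensor_of m a b"
    and "tensor_sym r"
  shows "PLYBE_solution cc br m a b \<longleftrightarrow>
    (\<forall>u v.
       cc (r_tilde r u) (r_tilde r v)
         = r_tilde r (vadd (vneg (dual_op cc (r_tilde r u) v))
                          (vneg (dual_op (bsq_op cc) (r_tilde r v) u))) \<and>
       br (r_tilde r u) (r_tilde r v)
         = r_tilde r (vadd (dual_op br (r_tilde r u) v)
                          (vneg (dual_op (sq_op br) (r_tilde r v) u))))"
proof -
  have bc: "bilinear_op cc" and bb: "bilinear_op br"
    using assms(1) by (simp_all add: dual_pre_poisson_def)
  have sym: "tensor_sym (tensor_of m a b)" using assms(2,3) by simp
  note e1 = eq1[OF bc sym] and e2 = eq2[OF bb sym]
  show ?thesis unfolding assms(2)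
  proof
    assume H: "PLYBE_solution cc br m a b"
    then have P0: "P_of cc m a b = (\<lambda>p q s. 0)" and L0: "L_of br m a b = (\<lambda>p q s. 0)"
      by (simp_all add: PLYBE_solution_def)
    show "\<forall>u v.
       cc (r_tilde (tensor_of m a b) u) (r_tilde (tensor_of m a b) v)
         = r_tilde (tensor_of m a b) (vadd (vneg (dual_op cc (r_tilde (tensor_of m a b) u) v))
                          (vneg (dual_op (bsq_op cc) (r_tilde (tensor_of m a b) v) u))) \<and>
       br (r_tilde (tensor_of m a b) u) (r_tilde (tensor_of m a b) v)
         = r_tilde (tensor_of m a b) (vadd (dual_op br (r_tilde (tensor_of m a b) u) v)
                          (vneg (dual_op (sq_op br) (r_tilde (tensor_of m a b) v) u)))"
    proof (intro allI conjI ext)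
      fix u v s
      show "cc (r_tilde (tensor_of m a b) u) (r_tilde (tensor_of m a b) v) s
         = r_tilde (tensor_of m a b) (vadd (vneg (dual_op cc (r_tilde (tensor_of m a b) u) v))
                          (vneg (dual_op (bsq_op cc) (r_tilde (tensor_of m a b) v) u))) s"
        using e1[of u v s] P0 by simp
      show "br (r_tilde (tensor_of m a b) u) (r_tilde (tensor_of m a b) v) s
         = r_tilde (tensor_of m a b) (vadd (dual_op br (r_tilde (tensor_of m a b) u) v)
                          (vneg (dual_op (sq_op br) (r_tilde (tensor_of m a b) v) u))) s"
        using e2[of u v s] L0 by simp
    qed
  next
    assume H: "\<forall>u v.
       cc (r_tilde (tensor_of m a b) u) (r_tilde (tensor_of m a b) v)
         = r_tilde (tensor_of m a b) (vadd (vneg (dual_op cc (r_tilde (tensor_of m a b) u) v))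
                          (vneg (dual_op (bsq_op cc) (r_tilde (tensor_of m a b) v) u))) \<and>
       br (r_tilde (tensor_of m a b) u) (r_tilde (tensor_of m a b) v)
         = r_tilde (tensor_of m a b) (vadd (dual_op br (r_tilde (tensor_of m a b) u) v)
                          (vneg (dual_op (sq_op br) (r_tilde (tensor_of m a b) v) u)))"
    have P0: "P_of cc m a b p q s = 0" for p q s
    proof -
      have "0 = (\<Sum>p'\<in>UNIV. \<Sum>q'\<in>UNIV. basis_vec p p' * basis_vec q q' * P_of cc m a b p' q' s)"
        using e1[of "basis_vec p" "basis_vec q" s] H by simp
      then show ?thesis by (simp only: basis_sum)
    qed
    have L0: "L_of br m a b p q s = 0" for p q s
    proof -
      have "0 = (\<Sum>p'\<in>UNIV. \<Sum>q'\<in>UNIV. basis_vec p p' * basis_vec q q' * L_of br m a b p' q' s)"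
        using e2[of "basis_vec p" "basis_vec q" s] H by simp
      then show ?thesis by (simp only: basis_sum)
    qed
    show "PLYBE_solution cc br m a b"
      unfolding PLYBE_solution_def using P0 L0 by (simp add: fun_eq_iff)
  qed
qed

end
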